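(* Let $L$ be a finite archimedean extension of $\mathbb{Z}_\mathrm{max}$. Then $\mathrm{ui}(L/\mathbb{Z}_\mathrm{max})<\infty$.
   Context: A semifield is a commutative semiring in which every nonzero element is a unit. $\mathbb{Z}_\mathrm{max}=\mathbb{Z}\cup\{-\infty\}$ is the semifield with addition $\max$ and multiplication ordinary addition. An extension of a semifield $K$ is a semifield $L$ with an injective homomorphism $K\to L$ (identify $K$ with its image); it is finite if $L$ is a finitely generated $K$-semimodule. For idempotent $K$, the extension is archimedean if for every $x\in L$ there is $y\in K$ with $x+y=y$. The unit index is $\mathrm{ui}(L/K)=|L^\times/K^\times|$. *)

theory Defs
  imports Main
begin

class semifield = comm_semiring_1 +
  assumes nonzero_unit: "x \<noteq> 0 \<Longrightarrow> \<exists>y. x * y = 1"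

datatype zmax = NegInf | Fin int

instantiation zmax :: semifield
begin

definition zero_zmax :: zmax where "zero_zmax = NegInf"
definition one_zmax :: zmax where "one_zmax = Fin 0"

fun plus_zmax :: "zmax \<Rightarrow> zmax \<Rightarrow> zmax" where
  "plus_zmax NegInf y = y"
| "plus_zmax x NegInf = x"
| "plus_zmax (Fin a) (Fin b) = Fin (max a b)"

fun times_zmax :: "zmax \<Rightarrow> zmax \<Rightarrow> zmax" where
  "times_zmax NegInf y = NegInf"
| "times_zmax x NegInf = NegInf"
| "times_zmax (Fin a) (Fin b) = Fin (a + b)"

instance
proof
  fix a b c :: zmax
  show "a + b + c = a + (b + c)" by (cases a; cases b; cases c) auto
  show "a + b = b + a" by (cases a; cases b) auto
  show "0 + a = a" by (simp add: zero_zmax_def)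
  show "a * b * c = a * (b * c)" by (cases a; cases b; cases c) auto
  show "a * b = b * a" by (cases a; cases b) auto
  show "1 * a = a" by (cases a) (auto simp: one_zmax_def)
  show "0 * a = 0" by (simp add: zero_zmax_def)
  show "a * 0 = 0" by (cases a) (auto simp: zero_zmax_def)
  show "(a + b) * c = a * c + b * c"
    by (cases a; cases b; cases c) (auto simp: max_def)
  show "(0::zmax) \<noteq> 1" by (simp add: zero_zmax_def one_zmax_def)
  show "a \<noteq> 0 \<Longrightarrow> \<exists>y. a * y = 1"
  proof -
    assume "a \<noteq> 0"
    then obtain n where "a = Fin n" by (cases a) (auto simp: zero_zmax_def)
    then show ?thesis by (intro exI[of _ "Fin (-n)"]) (simp add: one_zmax_def)
  qed
qed

end

definition units_set :: "'a::comm_semiring_1 set" where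
  "units_set = {x. \<exists>y. x * y = 1}"

definition semiring_hom :: "('a::comm_semiring_1 \<Rightarrow> 'b::comm_semiring_1) \<Rightarrow> bool" where
  "semiring_hom f \<longleftrightarrow> f 0 = 0 \<and> f 1 = 1 \<and>
     (\<forall>a b. f (a + b) = f a + f b) \<and> (\<forall>a b. f (a * b) = f a * f b)"

definition is_extension :: "('a::semifield \<Rightarrow> 'b::semifield) \<Rightarrow> bool" where
  "is_extension f \<longleftrightarrow> semiring_hom f \<and> inj f"

definition finite_extension :: "('a::semifield \<Rightarrow> 'b::semifield) \<Rightarrow> bool" where
  "finite_extension f \<longleftrightarrow> is_extension f \<and>
     (\<exists>S::'b set. finite S \<and> (\<forall>x. \<exists>c. x = (\<Sum>s\<in>S. f (c s) * s)))"

definition archimedean_extension :: "('a::semifield \<Rightarrow> 'b::semifield) \<Rightarrow> bool" where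
  "archimedean_extension f \<longleftrightarrow> (\<forall>x. \<exists>y. x + f y = f y)"

text \<open>The quotient group L^\<times>/K^\<times> as its set of cosets u K^\<times>.\<close>
definition unit_quotient :: "('a::semifield \<Rightarrow> 'b::semifield) \<Rightarrow> 'b set set" where
  "unit_quotient f = (\<lambda>u. (\<lambda>k. u * f k) ` units_set) ` units_set"

end

theory Submission
  imports Defs "HOL-Library.FuncSet"
begin

lemma sum_le_absorb:
  fixes g :: "'x \<Rightarrow> 'b::comm_semiring_1"
  assumes "finite X" "\<forall>x\<in>X. g x + b = b"
  shows "sum g X + b = b"
  using assms
proof (induction X rule: finite_induct)
  case empty then show ?case by simp
next
  case (insert x F)
  then have "sum g (insert x F) + b = g x + (sum g F + b)" by (simp add: add.assoc)
  also have "\<dots> = b" using insert by simp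
  finally show ?case .
qed

lemma sum_absorb:
  fixes g :: "'x \<Rightarrow> 'b::comm_semiring_1"
  assumes idem: "\<And>x::'b. x + x = x" and fin: "finite A" and sub: "B \<subseteq> A" and b0: "b0 \<in> B"
    and le: "\<forall>x\<in>A-B. g x + g b0 = g b0"
  shows "sum g A = sum g B"
proof -
  have 1: "sum g (A-B) + g b0 = g b0" using fin le by (intro sum_le_absorb) auto
  have finB: "finite B" using fin sub finite_subset by blast
  have "sum g B = g b0 + sum g (B - {b0})" using finB b0 by (simp add: sum.remove)
  then have 2: "sum g B + g b0 = sum g B"
    by (metis add.assoc add.commute idem)
  have "sum g A = sum g (A - B) + sum g B" using sub fin by (simp add: sum.subset_diff)
  also have "\<dots> = sum g (A - B) + (sum g B + g b0)" using 2 by simp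
  also have "\<dots> = sum g B + (sum g (A-B) + g b0)" by (simp add: ac_simps)
  also have "\<dots> = sum g B" using 1 2 by simp
  finally show ?thesis .
qed

lemma units_mult:
  assumes "(a::'a::comm_semiring_1) \<in> units_set" "k \<in> units_set"
  shows "a * k \<in> units_set"
proof -
  obtain a' k' where "a * a' = 1" "k * k' = 1" using assms by (auto simp: units_set_def)
  then have "(a*k) * (a'*k') = 1" by (metis mult.assoc mult.left_commute mult_1_right)
  then show ?thesis by (auto simp: units_set_def)
qed

lemma coset_eq:
  fixes f :: "zmax \<Rightarrow> 'b::semifield"
  assumes hom: "semiring_hom f" and a: "a \<in> units_set" and b: "b \<in> units_set"
    and u: "u = v * f a" and v: "v = u * f b"
  shows "(\<lambda>k. u * f k) ` units_set = (\<lambda>k. v * f k) ` units_set"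
proof
  show "(\<lambda>k. u * f k) ` units_set \<subseteq> (\<lambda>k. v * f k) ` units_set"
  proof
    fix x assume "x \<in> (\<lambda>k. u * f k) ` units_set"
    then obtain k where k: "k \<in> units_set" "x = u * f k" by auto
    have "x = v * f (a * k)" using k u hom by (simp add: semiring_hom_def mult.assoc)
    then show "x \<in> (\<lambda>k. v * f k) ` units_set" using units_mult[OF a k(1)] by auto
  qed
next
  show "(\<lambda>k. v * f k) ` units_set \<subseteq> (\<lambda>k. u * f k) ` units_set"
  proof
    fix x assume "x \<in> (\<lambda>k. v * f k) ` units_set"
    then obtain k where k: "k \<in> units_set" "x = v * f k" by auto
    have "x = u * f (b * k)" using k v hom by (simp add: semiring_hom_def mult.assoc)
    then show "x \<in> (\<lambda>k. u * f k) ` units_set" using units_mult[OF b k(1)] by auto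
  qed
qed

theorem mainTheorem6:
  fixes f :: "zmax \<Rightarrow> 'b::semifield"
  assumes "finite_extension f"
    and "archimedean_extension f"
  shows "finite (unit_quotient f)"
proof -
  from assms(1) obtain S where hom: "semiring_hom f" and finS: "finite S"
    and span: "\<forall>x. \<exists>c. x = (\<Sum>s\<in>S. f (c s) * s)"
    by (auto simp: finite_extension_def is_extension_def)
  have arch: "\<forall>x. \<exists>y. x + f y = f y" using assms(2) by (simp add: archimedean_extension_def)
  define e where "e a = f (Fin a)" for a
  have e_mult: "e a * e b = e (a+b)" for a b
    using hom unfolding e_def semiring_hom_def by (metis times_zmax.simps(3))
  have e_add: "e a + e b = e (max a b)" for a b
    using hom unfolding e_def semiring_hom_def by (metis plus_zmax.simps(3))
  have e0: "e 0 = 1" using hom unfolding e_def semiring_hom_def by (simp add: one_zmax_def)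
  have fNeg: "f NegInf = 0" using hom unfolding semiring_hom_def by (simp add: zero_zmax_def)
  have oo: "(1::'b) + 1 = 1"
  proof -
    have h: "f (1 + 1) = f 1 + f 1" using hom unfolding semiring_hom_def by blast
    have "(1::zmax) + 1 = 1" by (simp add: one_zmax_def)
    then have "f 1 + f 1 = f 1" using h by simp
    moreover have "f 1 = 1" using hom unfolding semiring_hom_def by blast
    ultimately show ?thesis by simp
  qed
  have idem: "x + x = x" for x :: 'b
  proof -
    have "x * (1 + 1) = x * 1 + x * 1" by (rule distrib_left)
    then show ?thesis using oo by simp
  qed
  have le_mono: "a \<le> b \<Longrightarrow> e a + e b = e b" for a b using e_add by (simp add: max_def)
  have trans: "x + y = y \<Longrightarrow> y + z = z \<Longrightarrow> x + z = z" for x y z :: 'b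
    by (metis add.assoc)
  have mulmono: "x + y = y \<Longrightarrow> x*z + y*z = y*z" for x y z :: 'b
    by (metis distrib_right)
  have ub: "\<exists>a. x + e a = e a" for x
  proof -
    obtain y where y: "x + f y = f y" using arch by blast
    show ?thesis
    proof (cases y)
      case NegInf
      then have "x = 0" using y fNeg by simp
      then show ?thesis by simp
    next
      case (Fin a) then show ?thesis using y e_def by auto
    qed
  qed
  have lb: "x \<noteq> 0 \<Longrightarrow> \<exists>a. e (-a) + x = x" for x
  proof -
    assume "x \<noteq> 0"
    then obtain y where xy: "x * y = 1" using nonzero_unit by blast
    obtain a where a: "y + e a = e a" using ub by blast
    have "y * (x * e (-a)) + e a * (x * e (-a)) = e a * (x * e (-a))" using mulmono[OF a] .
    moreover have "y * (x * e (-a)) = (x * y) * e (-a)" by (simp add: ac_simps)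
    then have "y * (x * e (-a)) = e (-a)" using xy by simp
    moreover have "e a * (x * e (-a)) = x" using e_mult[of a "-a"] e0 by (simp add: ac_simps)
    ultimately show ?thesis by auto
  qed
  define S0 where "S0 = S - {0}"
  have finS0: "finite S0" using finS by (simp add: S0_def)
  obtain U where U: "\<forall>s. s + e (U s) = e (U s)" using ub by metis
  obtain Lo where Lo: "\<forall>s\<in>S0. e (- Lo s) + s = s" using lb unfolding S0_def by (metis DiffE singletonI)
  define m where "m = Max (insert 1 (U ` S0 \<union> Lo ` S0))"
  have finM: "finite (insert 1 (U ` S0 \<union> Lo ` S0))" using finS0 by simp
  have m1: "1 \<le> m" unfolding m_def using finM by (intro Max_ge) auto
  have mU: "s \<in> S0 \<Longrightarrow> U s \<le> m" for s unfolding m_def using finM by (intro Max_ge) auto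
  have mL: "s \<in> S0 \<Longrightarrow> Lo s \<le> m" for s unfolding m_def using finM by (intro Max_ge) auto
  have ubm: "s \<in> S0 \<Longrightarrow> s + e m = e m" for s
    using trans[OF U[rule_format, of s] le_mono[OF mU]] by blast
  have lbm: "s \<in> S0 \<Longrightarrow> e (-m) + s = s" for s
    using trans[OF le_mono[of "-m" "- Lo s"] Lo[rule_format, of s]] mL by auto
  define D where "D = insert NegInf (Fin ` {-2*m..0})"
  define coset where "coset v = (\<lambda>k. v * f k) ` units_set" for v
  define F where "F = (\<lambda>c. \<Sum>s\<in>S. f (c s) * s) ` (S \<rightarrow>\<^sub>E D)"
  have finF: "finite F" unfolding F_def D_def using finS by (intro finite_imageI finite_PiE) auto
  have key: "coset u \<in> coset ` F" if uu: "u \<in> units_set" for u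
  proof -
    obtain y where "u * y = 1" using uu by (auto simp: units_set_def)
    then have u0: "u \<noteq> 0" by auto
    obtain c where c: "u = (\<Sum>s\<in>S. f (c s) * s)" using span by blast
    define P where "P = {s\<in>S0. c s \<noteq> NegInf}"
    have finP: "finite P" using finS0 by (simp add: P_def)
    have "u = (\<Sum>s\<in>P. f (c s) * s)"
      unfolding c using finS fNeg
      by (intro sum.mono_neutral_right) (auto simp: P_def S0_def)
    note uP = this
    have Pne: "P \<noteq> {}" using uP u0 by auto
    define k where "k s = (case c s of Fin j \<Rightarrow> j | NegInf \<Rightarrow> 0)" for s
    have cP: "s \<in> P \<Longrightarrow> c s = Fin (k s)" for s by (cases "c s") (auto simp: P_def k_def)
    define K where "K = Max (k ` P)"
    obtain s0 where s0: "s0 \<in> P" "k s0 = K" unfolding K_def using finP Pne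
      by (metis (no_types, lifting) Max_in finite_imageI image_iff image_is_empty)
    have kK: "s \<in> P \<Longrightarrow> k s \<le> K" for s unfolding K_def using finP by auto
    define g where "g s = e (k s - K) * s" for s
    have uK: "u * e (-K) = (\<Sum>s\<in>P. g s)"
      unfolding uP sum_distrib_right
    proof (rule sum.cong[OF refl])
      fix s assume "s \<in> P"
      then have "f (c s) * s * e (- K) = e (k s) * e (-K) * s" by (simp add: cP e_def ac_simps)
      then show "f (c s) * s * e (- K) = g s" by (simp add: e_mult g_def)
    qed
    define P' where "P' = {s\<in>P. K - 2*m < k s}"
    have s0P': "s0 \<in> P'" using s0 m1 by (auto simp: P'_def)
    have gs0: "g s0 = s0" using s0 e0 by (simp add: g_def)
    have s0S0: "s0 \<in> S0" using s0 by (simp add: P_def)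
    have absorb: "\<forall>x\<in>P-P'. g x + g s0 = g s0"
    proof
      fix s assume s: "s \<in> P - P'"
      then have sS0: "s \<in> S0" and ks: "k s \<le> K - 2*m" by (auto simp: P_def P'_def)
      have 1: "g s + e (k s - K) * e m = e (k s - K) * e m"
        using mulmono[OF ubm[OF sS0], of "e (k s - K)"] by (simp add: g_def ac_simps)
      have 2: "e (k s - K) * e m + e (-m) = e (-m)"
        using le_mono[of "k s - K + m" "-m"] ks by (simp add: e_mult)
      have 3: "e (-m) + g s0 = g s0" using lbm[OF s0S0] gs0 by simp
      show "g s + g s0 = g s0" using trans[OF trans[OF 1 2] 3] .
    qed
    have sumP: "(\<Sum>s\<in>P. g s) = (\<Sum>s\<in>P'. g s)"
      using sum_absorb[OF idem finP _ s0P' absorb] by (auto simp: P'_def)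
    define c' where "c' s = (if s \<in> S then (if s \<in> P' then Fin (k s - K) else NegInf) else undefined)" for s
    have c'D: "c' \<in> S \<rightarrow>\<^sub>E D"
    proof
      fix s assume "s \<in> S"
      show "c' s \<in> D"
      proof (cases "s \<in> P'")
        case True
        then have "K - 2*m < k s" "k s \<le> K" using kK by (auto simp: P'_def)
        then show ?thesis using True \<open>s \<in> S\<close> by (auto simp: c'_def D_def)
      qed (auto simp: c'_def D_def \<open>s \<in> S\<close>)
    qed (simp add: c'_def)
    have P'S: "P' \<subseteq> S" by (auto simp: P'_def P_def S0_def)
    have "(\<Sum>s\<in>S. f (c' s) * s) = (\<Sum>s\<in>P'. g s)"
    proof (rule sum.mono_neutral_cong_right[OF finS P'S])
      show "\<forall>i\<in>S - P'. f (c' i) * i = 0"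
      proof
        fix i assume "i \<in> S - P'"
        then have "c' i = NegInf" by (simp add: c'_def)
        then show "f (c' i) * i = 0" using fNeg by simp
      qed
      fix x assume "x \<in> P'"
      then have "c' x = Fin (k x - K)" using P'S by (auto simp: c'_def)
      then show "f (c' x) * x = g x" by (simp add: g_def e_def)
    qed
    then have "u * e (-K) = (\<lambda>c. \<Sum>s\<in>S. f (c s) * s) c'" using uK sumP by simp
    then have vF: "u * e (-K) \<in> F" unfolding F_def using c'D by (rule image_eqI)
    have "coset u = coset (u * e (-K))" unfolding coset_def
    proof (rule coset_eq[OF hom, of "Fin K" "Fin (-K)"])
      show "Fin K \<in> units_set" by (auto simp: units_set_def one_zmax_def intro!: exI[of _ "Fin (-K)"])
      show "Fin (-K) \<in> units_set" by (auto simp: units_set_def one_zmax_def intro!: exI[of _ "Fin K"])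
      show "u = u * e (- K) * f (Fin K)"
        using e_mult[of "-K" K] e0 by (simp add: e_def[symmetric] mult.assoc)
      show "u * e (- K) = u * f (Fin (- K))" by (simp add: e_def)
    qed
    then show ?thesis using vF by blast
  qed
  have "unit_quotient f \<subseteq> coset ` F"
    unfolding unit_quotient_def coset_def[symmetric] using key by auto
  then show ?thesis using finF finite_subset by blast
qed

end
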